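(* Let $\sim$ be a congruence on a finitely generated commutative monoid $Q$ and $P\subset Q$ a prime ideal. Then $P$ is an associated prime ideal of $\sim$ if and only if every primary decomposition of $\sim$ (i.e. every expression of $\sim$ as the common refinement of finitely many primary congruences) has a $P$-primary component. Moreover, if $P$ is not associated to $\sim$, then every $P$-primary component in every primary decomposition of $\sim$ is redundant: omitting it leaves another primary decomposition of $\sim$.
   Context: $Q$ is written additively with identity $0$. An element $\infty$ of a commutative monoid $M$ is \emph{nil} if $m+\infty=\infty$ for all $m$; $m$ is \emph{nilpotent} if $nm$ is nil for some $n\in\mathbb N$, \emph{cancellative} if $m+a=m+b\Rightarrow a=b$. An \emph{ideal} of $Q$ is a subset $T$ with $T+Q\subseteq T$ (empty set allowed); an ideal $P\ne Q$ is \emph{prime} if $a+b\in P\Rightarrow a\in P$ or $b\in P$; by convention $\varnothing$ is a prime ideal exactly when $Q$ has no nil. A \emph{congruence} is an equivalence relation $\sim$ on $Q$ with $a\sim b\Rightarrow a+c\sim b+c$; $\bar Q=Q/\sim$, $\bar q$ the class of $q$. Common refinement = intersection in $Q\times Q$. A congruence is \emph{primary} if every element of $\bar Q$ is nilpotent or cancellative, and then \emph{$P$-primary} for the prime $P=\{q:\bar q\text{ nilpotent}\}$. Localization: for a prime $P$, $\bar Q_P$ is the monoid of formal differences $\bar a-\bar u$ ($a\in Q$, $u\in Q\setminus P$) with $\bar a-\bar u=\bar b-\bar v$ iff $\bar w+\bar v+\bar a=\bar w+\bar u+\bar b$ in $\bar Q$ for some $w\in Q\setminus P$; elements $p\in Q$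 have images $\bar p=\bar p-\bar 0$ in $\bar Q_P$. $P$ is an \emph{associated prime ideal} of $\sim$ if the relation on $\bar Q_P$ given by $x\equiv y$ iff $x+\bar p=y+\bar p$ for all $p\in P$ is not the identity relation (for $P=\varnothing$ this relation is the universal one, so $\varnothing$ is associated iff $\bar Q_\varnothing$ has more than one element). *)

theory Defs
  imports Main
begin

text \<open>The commutative monoid Q is the whole type 'a :: comm_monoid_add.
  Congruences are relations on Q given as sets of pairs; the quotient
  Q/R is represented through R itself (classes of q are compared via R).\<close>

inductive_set mon_gen :: "'a::comm_monoid_add set \<Rightarrow> 'a set" for G where
  zero: "0 \<in> mon_gen G"
| gen: "g \<in> G \<Longrightarrow> g \<in> mon_gen G"
| add: "a \<in> mon_gen G \<Longrightarrow> b \<in> mon_gen G \<Longrightarrow> a + b \<in> mon_gen G"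

definition finitely_generated :: "'a::comm_monoid_add itself \<Rightarrow> bool" where
  "finitely_generated _ \<longleftrightarrow> (\<exists>G::'a set. finite G \<and> mon_gen G = UNIV)"

definition nsum :: "nat \<Rightarrow> 'a::comm_monoid_add \<Rightarrow> 'a" where
  "nsum n m = (((+) m) ^^ n) 0"

definition congruence :: "('a::comm_monoid_add \<times> 'a) set \<Rightarrow> bool" where
  "congruence R \<longleftrightarrow> equiv UNIV R \<and> (\<forall>a b c. (a, b) \<in> R \<longrightarrow> (a + c, b + c) \<in> R)"

definition is_ideal :: "'a::comm_monoid_add set \<Rightarrow> bool" where
  "is_ideal T \<longleftrightarrow> (\<forall>t\<in>T. \<forall>q. t + q \<in> T)"

definition has_nil :: "'a::comm_monoid_add itself \<Rightarrow> bool" where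
  "has_nil _ \<longleftrightarrow> (\<exists>z::'a. \<forall>m. m + z = z)"

definition prime_ideal :: "'a::comm_monoid_add set \<Rightarrow> bool" where
  "prime_ideal P \<longleftrightarrow> is_ideal P \<and> P \<noteq> UNIV \<and>
     (\<forall>a b. a + b \<in> P \<longrightarrow> a \<in> P \<or> b \<in> P) \<and>
     (P = {} \<longrightarrow> \<not> has_nil TYPE('a))"

definition quot_nil :: "('a::comm_monoid_add \<times> 'a) set \<Rightarrow> 'a \<Rightarrow> bool" where
  "quot_nil R z \<longleftrightarrow> (\<forall>m. (m + z, z) \<in> R)"

definition quot_nilpotent :: "('a::comm_monoid_add \<times> 'a) set \<Rightarrow> 'a \<Rightarrow> bool" where
  "quot_nilpotent R q \<longleftrightarrow> (\<exists>n. quot_nil R (nsum n q))"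

definition quot_cancellative :: "('a::comm_monoid_add \<times> 'a) set \<Rightarrow> 'a \<Rightarrow> bool" where
  "quot_cancellative R m \<longleftrightarrow> (\<forall>a b. (m + a, m + b) \<in> R \<longrightarrow> (a, b) \<in> R)"

definition primary :: "('a::comm_monoid_add \<times> 'a) set \<Rightarrow> bool" where
  "primary R \<longleftrightarrow> congruence R \<and> (\<forall>q. quot_nilpotent R q \<or> quot_cancellative R q)"

definition P_primary :: "('a::comm_monoid_add \<times> 'a) set \<Rightarrow> 'a set \<Rightarrow> bool" where
  "P_primary R P \<longleftrightarrow> primary R \<and> P = {q. quot_nilpotent R q}"

text \<open>Localization at P: the formal difference a - u (u not in P) is represented
  by the pair (a,u); loc_eq states equality of formal differences in (Q/R)_P.\<close>
definition loc_eq :: "('a::comm_monoid_add \<times> 'a) set \<Rightarrow> 'a set \<Rightarrow> 'a \<times> 'a \<Rightarrow> 'a \<times> 'a \<Rightarrow> bool" where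
  "loc_eq R P x y \<longleftrightarrow> (case x of (a, u) \<Rightarrow> case y of (b, v) \<Rightarrow>
      \<exists>w. w \<notin> P \<and> (w + v + a, w + u + b) \<in> R)"

text \<open>P is associated: the relation x == y iff x + p = y + p for all p in P
  on the localization is not the identity.  Adding the image of p (= p - 0)
  to a - u gives (a+p) - u.\<close>
definition associated_prime :: "('a::comm_monoid_add \<times> 'a) set \<Rightarrow> 'a set \<Rightarrow> bool" where
  "associated_prime R P \<longleftrightarrow> (\<exists>a u b v. u \<notin> P \<and> v \<notin> P \<and>
      (\<forall>p\<in>P. loc_eq R P (a + p, u) (b + p, v)) \<and> \<not> loc_eq R P (a, u) (b, v))"

definition primary_decomposition :: "('a::comm_monoid_add \<times> 'a) set \<Rightarrow> ('a \<times> 'a) set set \<Rightarrow> bool" where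
  "primary_decomposition R \<C> \<longleftrightarrow> finite \<C> \<and> (\<forall>C\<in>\<C>. primary C) \<and> \<Inter>\<C> = R"

end

theory Submission
  imports Defs
begin


lemma nsum_0[simp]: "nsum 0 m = 0" by (simp add: nsum_def)
lemma nsum_Suc: "nsum (Suc n) m = m + nsum n m" by (simp add: nsum_def)
lemma nsum_add: "nsum (a+b) m = nsum a m + nsum b m"
  by (induct a) (simp_all add: nsum_Suc add.assoc)
lemma nsum_1[simp]: "nsum 1 m = m" by (simp add: nsum_def)

lemma congD: "congruence R \<Longrightarrow> (a,b)\<in>R \<Longrightarrow> (a+c,b+c)\<in>R"
  by (simp add: congruence_def)
lemma cong_refl: "congruence R \<Longrightarrow> (a,a)\<in>R"
  unfolding congruence_def equiv_def refl_on_def by blast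
lemma cong_sym: "congruence R \<Longrightarrow> (a,b)\<in>R \<Longrightarrow> (b,a)\<in>R"
  unfolding congruence_def equiv_def sym_def by blast
lemma cong_trans: "congruence R \<Longrightarrow> (a,b)\<in>R \<Longrightarrow> (b,c)\<in>R \<Longrightarrow> (a,c)\<in>R"
  unfolding congruence_def equiv_def trans_def by blast
lemma congL: "congruence R \<Longrightarrow> (a,b)\<in>R \<Longrightarrow> (c+a,c+b)\<in>R"
  using congD[of R a b c] by (simp add: add.commute)
lemma cong_eq: "(a,b)\<in>R \<Longrightarrow> a = a' \<Longrightarrow> b = b' \<Longrightarrow> (a',b')\<in>R" by simp

lemma congruenceI:
  assumes "\<And>a. (a,a)\<in>R" "\<And>a b. (a,b)\<in>R \<Longrightarrow> (b,a)\<in>R"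
    "\<And>a b c. (a,b)\<in>R \<Longrightarrow> (b,c)\<in>R \<Longrightarrow> (a,c)\<in>R"
    "\<And>a b c. (a,b)\<in>R \<Longrightarrow> (a+c,b+c)\<in>R"
  shows "congruence R"
  unfolding congruence_def equiv_def
proof (intro conjI allI impI)
  show "refl_on UNIV R" using assms(1) unfolding refl_on_def by simp
  show "sym R" using assms(2) by (auto intro: symI)
  show "trans R" using assms(3) by (auto intro: transI)
  fix a b c assume "(a,b) \<in> R" then show "(a+c,b+c)\<in>R" using assms(4) by blast
qed simp

lemma nil_add: "congruence C \<Longrightarrow> quot_nil C z \<Longrightarrow> quot_nil C (z + m)"
  unfolding quot_nil_def
proof
  fix m' assume c: "congruence C" and n: "\<forall>m. (m + z, z) \<in> C"
  have 1: "(m' + (z+m), z) \<in> C" using n[rule_format, of "m'+m"] by (simp add: add_ac)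
  have "(z + m, z) \<in> C" using n[rule_format, of m] by (simp add: add_ac)
  then have "(z, z+m) \<in> C" using cong_sym[OF c] by blast
  then show "(m' + (z+m), z+m) \<in> C" using 1 cong_trans[OF c] by blast
qed

lemma nil_eq: "congruence C \<Longrightarrow> quot_nil C z \<Longrightarrow> quot_nil C z' \<Longrightarrow> (z,z')\<in>C"
  unfolding quot_nil_def
proof -
  assume c: "congruence C" and n: "\<forall>m. (m + z, z) \<in> C" and n': "\<forall>m. (m + z', z') \<in> C"
  have 1: "(z' + z, z) \<in> C" using n by blast
  have 2: "(z' + z, z') \<in> C" using n'[rule_format, of z] by (simp add: add.commute)
  show "(z, z') \<in> C" using cong_trans[OF c cong_sym[OF c 1] 2] .
qed

lemma prime_zero: "prime_ideal P \<Longrightarrow> 0 \<notin> P"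
proof
  assume a: "prime_ideal P" and z: "0 \<in> P"
  have "q \<in> P" for q using a z unfolding prime_ideal_def is_ideal_def by (metis add_0)
  then show False using a unfolding prime_ideal_def by blast
qed

lemma prime_add: "prime_ideal P \<Longrightarrow> a\<notin>P \<Longrightarrow> b\<notin>P \<Longrightarrow> a+b\<notin>P"
  unfolding prime_ideal_def by blast
lemma prime_nsum: "prime_ideal P \<Longrightarrow> s\<notin>P \<Longrightarrow> nsum n s \<notin> P"
  by (induct n) (simp_all add: prime_zero nsum_Suc prime_add)

lemma primary_cancel: "P_primary C P \<Longrightarrow> q \<notin> P \<Longrightarrow> quot_cancellative C q"
  unfolding P_primary_def primary_def by blast

lemma common_w:
  assumes "finite \<C>" "\<forall>C\<in>\<C>. congruence C" "prime_ideal P"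
    "\<forall>C\<in>\<C>. \<exists>w. w\<notin>P \<and> (w+x, w+y)\<in>C"
  shows "\<exists>w. w\<notin>P \<and> (\<forall>C\<in>\<C>. (w+x,w+y)\<in>C)"
  using assms
proof (induct \<C> rule: finite_induct)
  case empty
  then show ?case using prime_zero by blast
next
  case (insert C F)
  then obtain w1 where w1: "w1\<notin>P" "\<forall>C\<in>F. (w1+x,w1+y)\<in>C" by auto
  obtain w2 where w2: "w2\<notin>P" "(w2+x,w2+y)\<in>C" using insert by auto
  have "w2 + w1 \<notin> P" using prime_add insert w1 w2 by blast
  moreover have "\<forall>D\<in>insert C F. (w2+w1+x, w2+w1+y)\<in>D"
  proof
    fix D assume D: "D \<in> insert C F"
    show "(w2+w1+x, w2+w1+y)\<in>D"
    proof (cases "D = C")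
      case True
      then show ?thesis using congD[of C "w2+x" "w2+y" w1] w2 insert
        by (simp add: add_ac)
    next
      case False
      then have "D \<in> F" using D by auto
      then show ?thesis using congL[of D "w1+x" "w1+y" w2] w1 insert
        by (simp add: add_ac)
    qed
  qed
  ultimately show ?case by blast
qed

lemma forward:
  assumes R: "congruence R" and P: "prime_ideal P" and as: "associated_prime R P"
    and pd: "primary_decomposition R \<C>"
  shows "\<exists>C\<in>\<C>. P_primary C P"
proof (rule ccontr)
  assume no: "\<not> (\<exists>C\<in>\<C>. P_primary C P)"
  obtain a u b v where auv: "u \<notin> P" "v \<notin> P"
    "\<forall>p\<in>P. loc_eq R P (a + p, u) (b + p, v)" "\<not> loc_eq R P (a, u) (b, v)"
    using as unfolding associated_prime_def by blast
  have fin: "finite \<C>" and pr: "\<forall>C\<in>\<C>. primary C" and I: "\<Inter>\<C> = R"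
    using pd unfolding primary_decomposition_def by auto
  have cg: "\<forall>C\<in>\<C>. congruence C" using pr primary_def by blast
  have comp: "\<forall>C\<in>\<C>. \<exists>w. w\<notin>P \<and> (w+(v+a), w+(u+b))\<in>C"
  proof
    fix C assume C: "C \<in> \<C>"
    have prim: "primary C" using pr C by blast
    have c: "congruence C" using cg C by blast
    have RC: "R \<subseteq> C" using I C by blast
    have neq: "P \<noteq> {q. quot_nilpotent C q}" using no C prim unfolding P_primary_def by blast
    show "\<exists>w. w\<notin>P \<and> (w+(v+a), w+(u+b))\<in>C"
    proof (cases "\<exists>p\<in>P. \<not> quot_nilpotent C p")
      case True
      then obtain p where p: "p\<in>P" "\<not> quot_nilpotent C p" by blast
      have canc: "quot_cancellative C p" using prim p unfolding primary_def by blast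
      obtain w where w: "w\<notin>P" "(w + v + (a + p), w + u + (b + p)) \<in> R"
        using auv(3) p(1) unfolding loc_eq_def by auto
      have "(p + (w+(v+a)), p + (w+(u+b))) \<in> C"
        using w(2) RC by (auto simp: add_ac)
      then have "(w+(v+a), w+(u+b))\<in>C" using canc unfolding quot_cancellative_def by blast
      then show ?thesis using w(1) by blast
    next
      case False
      then have "P \<subseteq> {q. quot_nilpotent C q}" by blast
      then obtain s where s: "quot_nilpotent C s" "s \<notin> P" using neq by blast
      then obtain n where n: "quot_nil C (nsum n s)" unfolding quot_nilpotent_def by blast
      have "(nsum n s + (v+a), nsum n s + (u+b)) \<in> C"
        using nil_eq[OF c nil_add[OF c n] nil_add[OF c n]] by blast
      then show ?thesis using prime_nsum[OF P s(2)] by blast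
    qed
  qed
  obtain w where w: "w\<notin>P" "\<forall>C\<in>\<C>. (w+(v+a), w+(u+b))\<in>C"
    using common_w[OF fin cg P comp] by blast
  then have "(w+v+a, w+u+b) \<in> R" using I by (auto simp: add.assoc)
  then have "loc_eq R P (a, u) (b, v)" unfolding loc_eq_def using w(1) by auto
  then show False using auv(4) by blast
qed




lemma gen_decomp:
  assumes "mon_gen G = UNIV" "prime_ideal P" "x \<in> P"
  shows "\<exists>g\<in>G\<inter>P. \<exists>r. x = g + r"
proof -
  have "x \<in> mon_gen G" using assms by auto
  then show ?thesis using assms(3)
  proof (induct x rule: mon_gen.induct)
    case zero then show ?case using prime_zero[OF assms(2)] by blast
  next
    case (gen g) then show ?case by (intro bexI[of _ g] exI[of _ 0]) auto
  next
    case (add a b)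
    then have "a \<in> P \<or> b \<in> P" using assms(2) unfolding prime_ideal_def by blast
    then show ?case
    proof
      assume "a \<in> P"
      then obtain g r where "g\<in>G\<inter>P" "a = g + r" using add by blast
      then show ?case by (intro bexI[of _ g] exI[of _ "r+b"]) (simp_all add: add.assoc)
    next
      assume "b \<in> P"
      then obtain g r where "g\<in>G\<inter>P" "b = g + r" using add by blast
      then show ?case by (intro bexI[of _ g] exI[of _ "a+r"]) (simp_all add: add_ac)
    qed
  qed
qed

lemma sum_list_count: "count_list xs g \<ge> m \<Longrightarrow> \<exists>r. sum_list xs = nsum m g + r"
proof (induct xs arbitrary: m)
  case Nil then show ?case by simp
next
  case (Cons y ys)
  show ?case
  proof (cases "y = g")
    case True
    show ?thesis
    proof (cases m)
      case 0 then show ?thesis by simp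
    next
      case (Suc m')
      then have "count_list ys g \<ge> m'" using Cons True by simp
      then obtain r where "sum_list ys = nsum m' g + r" using Cons by blast
      then show ?thesis using True Suc by (auto simp: nsum_Suc add.assoc intro!: exI[of _ r])
    qed
  next
    case False
    then have "count_list ys g \<ge> m" using Cons by simp
    then obtain r where "sum_list ys = nsum m g + r" using Cons by blast
    then show ?thesis by (intro exI[of _ "y + r"]) (simp add: add.left_commute)
  qed
qed

lemma sum_list_split:
  fixes ps :: "'a::comm_monoid_add list"
  shows "\<forall>p\<in>set ps. p = gf p + rf p \<Longrightarrow> sum_list ps = sum_list (map gf ps) + sum_list (map rf ps)"
proof -
  assume a: "\<forall>p\<in>set ps. p = gf p + rf p"
  have "map (\<lambda>p. p) ps = map (\<lambda>p. gf p + rf p) ps" using a by (intro map_cong) auto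
  then have "sum_list ps = sum_list (map (\<lambda>p. gf p + rf p) ps)" by simp
  then show ?thesis using sum_list_addf[of gf rf ps] by simp
qed

lemma nil_power:
  fixes G P :: "'a::comm_monoid_add set"
  assumes G: "mon_gen G = UNIV" "finite G" and C: "P_primary C P" and P: "prime_ideal P"
  shows "\<exists>N. \<forall>ps. set ps \<subseteq> P \<and> length ps = N \<longrightarrow> quot_nil C (sum_list ps)"
proof -
  have c: "congruence C" using C unfolding P_primary_def primary_def by blast
  define H where "H = G \<inter> P"
  have finH: "finite H" using G H_def by auto
  have "\<forall>g\<in>H. \<exists>n. quot_nil C (nsum n g)"
    using C unfolding H_def P_primary_def quot_nilpotent_def by blast
  then obtain idx where idx: "\<forall>g\<in>H. quot_nil C (nsum (idx g) g)" by (rule bchoice[THEN exE])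
  have "\<forall>p\<in>P. \<exists>x. fst x \<in> H \<and> p = fst x + snd x" using gen_decomp[OF G(1) P] H_def by fastforce
  then obtain f where f: "\<forall>p\<in>P. fst (f p) \<in> H \<and> p = fst (f p) + snd (f p)" by (rule bchoice[THEN exE])
  define gf where "gf p = fst (f p)" for p
  define rf where "rf p = snd (f p)" for p
  have grf: "\<forall>p\<in>P. gf p \<in> H \<and> p = gf p + rf p" using f gf_def rf_def by simp
  show ?thesis
  proof (intro exI allI impI)
    fix ps assume ps: "set ps \<subseteq> P \<and> length ps = sum idx H + 1"
    define gs where "gs = map gf ps"
    have sgs: "set gs \<subseteq> H" using ps grf gs_def by auto
    have len: "length gs = sum idx H + 1" using ps gs_def by simp
    have "\<exists>g\<in>H. count_list gs g \<ge> idx g"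
    proof (rule ccontr)
      assume "\<not> ?thesis"
      then have "\<forall>g\<in>H. count_list gs g \<le> idx g" by auto
      then have "sum (count_list gs) H \<le> sum idx H" by (simp add: sum_mono)
      then show False using sum_count_set[OF sgs finH] len by simp
    qed
    then obtain g where g: "g\<in>H" "count_list gs g \<ge> idx g" by blast
    obtain r where r: "sum_list gs = nsum (idx g) g + r" using sum_list_count[OF g(2)] by blast
    have "sum_list ps = nsum (idx g) g + (r + sum_list (map rf ps))"
      using sum_list_split[of ps gf rf] grf ps r gs_def by (auto simp: add.assoc)
    moreover have "quot_nil C (nsum (idx g) g + (r + sum_list (map rf ps)))"
      using nil_add[OF c] idx g(1) by blast
    ultimately show "quot_nil C (sum_list ps)" by simp
  qed
qed

lemma core:
  fixes G P :: "'a::comm_monoid_add set"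
  assumes G: "mon_gen G = UNIV" "finite G" and C: "P_primary C P" and P: "prime_ideal P"
    and D: "\<And>a b c. (a,b)\<in>D \<Longrightarrow> (a+c,b+c)\<in>D"
    and DC: "D \<inter> C = R" and na: "\<not> associated_prime R P"
  shows "D \<subseteq> C"
proof
  fix z assume z: "z \<in> D"
  obtain x y where xy: "z = (x,y)" by fastforce
  have c: "congruence C" using C unfolding P_primary_def primary_def by blast
  obtain N where N: "\<forall>ps. set ps \<subseteq> P \<and> length ps = N \<longrightarrow> quot_nil C (sum_list ps)"
    using nil_power[OF G C P] by blast
  have na': "\<And>a u b v. u\<notin>P \<Longrightarrow> v\<notin>P \<Longrightarrow> (\<forall>p\<in>P. loc_eq R P (a + p, u) (b + p, v))
      \<Longrightarrow> loc_eq R P (a, u) (b, v)"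
    using na unfolding associated_prime_def by blast
  have z0: "0 \<notin> P" using prime_zero[OF P] .
  have "\<forall>ps. set ps \<subseteq> P \<and> length ps = N - d \<longrightarrow>
      loc_eq R P (x + sum_list ps, 0) (y + sum_list ps, 0)" for d
  proof (induct d)
    case 0
    show ?case
    proof (intro allI impI)
      fix ps assume ps: "set ps \<subseteq> P \<and> length ps = N - 0"
      have n: "quot_nil C (sum_list ps)" using N ps by simp
      have "(sum_list ps + x, sum_list ps + y) \<in> C"
        using nil_eq[OF c nil_add[OF c n] nil_add[OF c n]] .
      then have "(x + sum_list ps, y + sum_list ps) \<in> C" by (simp add: add.commute)
      moreover have "(x + sum_list ps, y + sum_list ps) \<in> D" using D z xy by blast
      ultimately have "(x + sum_list ps, y + sum_list ps) \<in> R" using DC by blast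
      then show "loc_eq R P (x + sum_list ps, 0) (y + sum_list ps, 0)"
        unfolding loc_eq_def using z0 by (auto intro!: exI[of _ 0])
    qed
  next
    case (Suc d)
    show ?case
    proof (cases "N - Suc d = N - d")
      case True then show ?thesis using Suc by simp
    next
      case False
      then have eq: "N - d = Suc (N - Suc d)" by simp
      show ?thesis
      proof (intro allI impI)
        fix ps assume ps: "set ps \<subseteq> P \<and> length ps = N - Suc d"
        have "\<forall>p\<in>P. loc_eq R P (x + sum_list ps + p, 0) (y + sum_list ps + p, 0)"
        proof
          fix p assume p: "p \<in> P"
          have "set (p#ps) \<subseteq> P \<and> length (p#ps) = N - d" using p ps eq by simp
          then have "loc_eq R P (x + sum_list (p#ps), 0) (y + sum_list (p#ps), 0)"
            using Suc by blast
          then show "loc_eq R P (x + sum_list ps + p, 0) (y + sum_list ps + p, 0)"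
            by (simp add: add_ac)
        qed
        then show "loc_eq R P (x + sum_list ps, 0) (y + sum_list ps, 0)"
          using na'[OF z0 z0] by blast
      qed
    qed
  qed
  from this[of N] have "loc_eq R P (x + sum_list [], 0) (y + sum_list [], 0)" by simp
  then have "loc_eq R P (x, 0) (y, 0)" by simp
  then obtain w where w: "w\<notin>P" "(w + x, w + y) \<in> R" unfolding loc_eq_def by auto
  then have "(w + x, w + y) \<in> C" using DC by blast
  then show "z \<in> C" using primary_cancel[OF C w(1)] xy unfolding quot_cancellative_def by blast
qed

lemma part2:
  fixes G P :: "'a::comm_monoid_add set"
  assumes G: "mon_gen G = UNIV" "finite G" and P: "prime_ideal P"
    and na: "\<not> associated_prime R P"
    and pd: "primary_decomposition R \<C>" and CC: "C \<in> \<C>" and C: "P_primary C P"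
  shows "primary_decomposition R (\<C> - {C})"
proof -
  have fin: "finite \<C>" and pr: "\<forall>C\<in>\<C>. primary C" and I: "\<Inter>\<C> = R"
    using pd unfolding primary_decomposition_def by auto
  let ?D = "\<Inter>(\<C> - {C})"
  have D: "(a+c,b+c)\<in>?D" if "(a,b)\<in>?D" for a b c
    using that pr unfolding primary_def by (auto intro: congD)
  have DC: "?D \<inter> C = R" using I CC by blast
  have "?D \<subseteq> C" using core[OF G C P D DC na] by blast
  then have "?D = R" using DC by blast
  then show ?thesis using fin pr unfolding primary_decomposition_def by auto
qed




definition FF :: "nat \<Rightarrow> (nat \<Rightarrow> nat) set" where
  "FF k = {a. \<forall>i\<ge>k. a i = 0}"

definition ltk :: "nat \<Rightarrow> (nat \<Rightarrow> nat) \<Rightarrow> (nat \<Rightarrow> nat) \<Rightarrow> bool" where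
  "ltk k a b \<longleftrightarrow> (\<exists>i<k. a i < b i \<and> (\<forall>j<i. a j = b j))"

definition phi :: "'a::comm_monoid_add list \<Rightarrow> (nat \<Rightarrow> nat) \<Rightarrow> 'a" where
  "phi gs a = (\<Sum>i<length gs. nsum (a i) (gs!i))"

lemma nsum_Suc0[simp]: "nsum (Suc 0) m = m" by (simp add: nsum_def)

lemma phi_add: "phi gs (\<lambda>i. a i + b i) = phi gs a + phi gs b"
  by (simp add: phi_def nsum_add sum.distrib)

lemma FF_add: "a \<in> FF k \<Longrightarrow> b \<in> FF k \<Longrightarrow> (\<lambda>i. a i + b i) \<in> FF k"
  by (simp add: FF_def)

lemma phi_surj:
  assumes "mon_gen G = UNIV" "set gs = G"
  shows "\<exists>a\<in>FF (length gs). phi gs a = q"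
proof -
  have "q \<in> mon_gen G" using assms by simp
  then show ?thesis
  proof (induct q rule: mon_gen.induct)
    case zero
    have "(\<lambda>i. 0) \<in> FF (length gs)" by (simp add: FF_def)
    moreover have "phi gs (\<lambda>i. 0) = 0" by (simp add: phi_def)
    ultimately show ?case by blast
  next
    case (gen g)
    then have "g \<in> set gs" using assms by simp
    then obtain j where j: "j < length gs" "gs ! j = g" unfolding in_set_conv_nth by blast
    let ?a = "\<lambda>i. if i = j then 1 else (0::nat)"
    have "?a \<in> FF (length gs)" using j by (simp add: FF_def)
    moreover have "phi gs ?a = (\<Sum>i<length gs. if i = j then gs!i else 0)"
      unfolding phi_def by (rule sum.cong) auto
    then have "phi gs ?a = g" using j by simp
    ultimately show ?case by blast
  next
    case (add a b)
    then obtain x y where "x \<in> FF (length gs)" "phi gs x = a" "y \<in> FF (length gs)" "phi gs y = b"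
      by blast
    then show ?case using phi_add[of gs x y] FF_add[of x "length gs" y] by (intro bexI[of _ "\<lambda>i. x i + y i"]) auto
  qed
qed

lemma ltk_total:
  assumes "a \<in> FF k" "b \<in> FF k" "a \<noteq> b"
  shows "ltk k a b \<or> ltk k b a"
proof -
  obtain i0 where "a i0 \<noteq> b i0" using assms(3) by blast
  define i where "i = (LEAST i. a i \<noteq> b i)"
  have ne: "a i \<noteq> b i" unfolding i_def by (rule LeastI) fact
  have eq: "\<forall>j<i. a j = b j" unfolding i_def using not_less_Least by blast
  have "i < k"
  proof (rule ccontr)
    assume "\<not> i < k"
    then have "a i = 0" "b i = 0" using assms(1,2) unfolding FF_def by auto
    then show False using ne by simp
  qed
  show ?thesis
  proof (cases "a i < b i")
    case True then show ?thesis unfolding ltk_def using eq \<open>i<k\<close> by blast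
  next
    case False then have "b i < a i" using ne by simp
    moreover have "\<forall>j<i. b j = a j" using eq by simp
    ultimately show ?thesis unfolding ltk_def using \<open>i<k\<close> by blast
  qed
qed

lemma ltk_add: "ltk k a b \<Longrightarrow> ltk k (\<lambda>i. a i + c i) (\<lambda>i. b i + c i)"
  unfolding ltk_def by auto

lemma ltk_irrefl: "\<not> ltk k a a"
  unfolding ltk_def by auto

lemma ltk_lex:
  assumes "ltk k a b"
  shows "(map a [0..<k], map b [0..<k]) \<in> lex less_than"
proof -
  obtain i where i: "i < k" "a i < b i" "\<forall>j<i. a j = b j" using assms unfolding ltk_def by blast
  have split: "[0..<k] = [0..<i] @ i # [Suc i..<k]"
    using upt_add_eq_append[of 0 i "k-i"] upt_conv_Cons[of i k] i(1) by simp
  have "map a [0..<i] = map b [0..<i]" using i(3) by (intro map_cong) auto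
  then show ?thesis unfolding lex_conv using split i(2)
    by (auto intro!: exI[of _ "map a [0..<i]"])
qed

lemma wf_ltk: "wf {(a,b). ltk k a b}"
proof -
  have "wf (inv_image (lex less_than) (\<lambda>a. map a [0..<k]))" by (rule wf_inv_image) auto
  moreover have "{(a,b). ltk k a b} \<subseteq> inv_image (lex less_than) (\<lambda>a. map a [0..<k])"
    using ltk_lex by auto
  ultimately show ?thesis by (rule wf_subset)
qed

lemma nat_subseq:
  fixes t :: "nat \<Rightarrow> nat"
  shows "\<exists>g::nat\<Rightarrow>nat. strict_mono g \<and> (\<forall>m n. m \<le> n \<longrightarrow> t (g m) \<le> t (g n))"
proof -
  define mn where "mn n = (LEAST v. \<exists>j\<ge>n. t j = v)" for n
  have mn_ex: "\<exists>j\<ge>n. t j = mn n" for n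
    unfolding mn_def by (rule LeastI[of _ "t n"]) auto
  have mn_le: "j \<ge> n \<Longrightarrow> mn n \<le> t j" for n j
    unfolding mn_def by (rule Least_le) auto
  define p where "p n = (SOME j. j \<ge> n \<and> t j = mn n)" for n
  have p: "p n \<ge> n \<and> t (p n) = mn n" for n
    unfolding p_def by (rule someI_ex) (use mn_ex in blast)
  define g where "g i = ((\<lambda>x. p (Suc x)) ^^ i) (p 0)" for i
  have gS: "g (Suc i) = p (Suc (g i))" for i unfolding g_def by simp
  have inc: "g i < g (Suc i)" for i using p[of "Suc (g i)"] gS[of i] by simp
  have "t (g i) \<le> t (g (Suc i))" for i
  proof -
    have "\<exists>n. g i = p n" by (cases i) (auto simp: g_def)
    then obtain n where n: "g i = p n" by blast
    have "t (g i) = mn n" using p n by simp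
    also have "\<dots> \<le> t (g (Suc i))"
    proof -
      have "g (Suc i) \<ge> n" using p[of n] p[of "Suc (g i)"] gS[of i] n by simp
      then show ?thesis using mn_le by blast
    qed
    finally show ?thesis .
  qed
  then have "\<forall>m n. m \<le> n \<longrightarrow> t (g m) \<le> t (g n)"
    using lift_Suc_mono_le[of "\<lambda>i. t (g i)"] by blast
  moreover have "strict_mono g" unfolding strict_mono_def
    using lift_Suc_mono_less[of g] inc by blast
  ultimately show ?thesis by blast
qed

lemma dickson:
  fixes s :: "nat \<Rightarrow> nat \<Rightarrow> nat"
  shows "\<exists>f::nat\<Rightarrow>nat. strict_mono f \<and> (\<forall>l<K. \<forall>m n. m \<le> n \<longrightarrow> s (f m) l \<le> s (f n) l)"
proof (induct K)
  case 0
  have 1: "strict_mono (\<lambda>n::nat. n)" by (rule strict_monoI) simp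
  have 2: "\<forall>l<(0::nat). \<forall>m n. m \<le> n \<longrightarrow> s ((\<lambda>n::nat. n) m) l \<le> s ((\<lambda>n::nat. n) n) l" by simp
  show ?case using 1 2 by blast
next
  case (Suc K)
  then obtain f :: "nat\<Rightarrow>nat" where f: "strict_mono f" "\<forall>l<K. \<forall>m n. m \<le> n \<longrightarrow> s (f m) l \<le> s (f n) l"
    by blast
  have "\<exists>g::nat\<Rightarrow>nat. strict_mono g \<and> (\<forall>m n. m \<le> n \<longrightarrow> s (f (g m)) K \<le> s (f (g n)) K)"
    using nat_subseq[of "\<lambda>n. s (f n) K"] by simp
  then obtain g :: "nat\<Rightarrow>nat" where g: "strict_mono g" "\<forall>m n. m \<le> n \<longrightarrow> s (f (g m)) K \<le> s (f (g n)) K"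
    by blast
  have "strict_mono (f \<circ> g)" using f(1) g(1) unfolding strict_mono_def by simp
  moreover have "\<forall>l<Suc K. \<forall>m n. m \<le> n \<longrightarrow> s ((f\<circ>g) m) l \<le> s ((f\<circ>g) n) l"
  proof (intro allI impI)
    fix l m n assume l: "l < Suc K" and mn: "(m::nat) \<le> n"
    show "s ((f\<circ>g) m) l \<le> s ((f\<circ>g) n) l"
    proof (cases "l = K")
      case True
      have "s (f (g m)) K \<le> s (f (g n)) K" using g(2)[rule_format, OF mn] .
      then show ?thesis using True by simp
    next
      case False
      then have lK: "l < K" using l by simp
      have gmn: "g m \<le> g n" using strict_mono_less_eq[OF g(1), of m n] mn by blast
      have "s (f (g m)) l \<le> s (f (g n)) l" using f(2)[rule_format, OF lK gmn] .
      then show ?thesis by simp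
    qed
  qed
  ultimately show ?case by blast
qed

definition is_idealF :: "nat \<Rightarrow> (nat \<Rightarrow> nat) set \<Rightarrow> bool" where
  "is_idealF k J \<longleftrightarrow> J \<subseteq> FF k \<and> (\<forall>a\<in>J. \<forall>c\<in>FF k. (\<lambda>i. a i + c i) \<in> J)"

lemma wf_ideals: "wf {(J',J). J \<subset> J' \<and> is_idealF k J'}"
  unfolding wf_iff_no_infinite_down_chain
proof
  assume "\<exists>f. \<forall>i. (f (Suc i), f i) \<in> {(J', J). J \<subset> J' \<and> is_idealF k J'}"
  then obtain f where f: "\<forall>i. f i \<subset> f (Suc i) \<and> is_idealF k (f (Suc i))" by auto
  have mono: "i \<le> j \<Longrightarrow> f i \<subseteq> f j" for i j
    using lift_Suc_mono_le[of f i j] f by blast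
  have "\<forall>i. \<exists>x. x \<in> f (Suc i) - f i" using f by blast
  then obtain x where x: "\<forall>i. x i \<in> f (Suc i) - f i" by (rule choice[THEN exE])
  obtain h where h: "strict_mono (h::nat\<Rightarrow>nat)" "\<forall>l<k. \<forall>m n. m \<le> n \<longrightarrow> x (h m) l \<le> x (h n) l"
    using dickson[of k x] by blast
  define i where "i = h 0"
  define j where "j = h 1"
  have ij: "i < j" using h(1) unfolding i_def j_def strict_mono_def by simp
  have le: "\<forall>l<k. x i l \<le> x j l" using h(2) unfolding i_def j_def by simp
  have xiF: "x i \<in> FF k" and xjF: "x j \<in> FF k"
    using x f unfolding is_idealF_def by blast+
  define d where "d = (\<lambda>l. x j l - x i l)"
  have dF: "d \<in> FF k" using xjF unfolding FF_def d_def by simp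
  have "(\<lambda>l. x i l + d l) = x j"
  proof
    fix l show "x i l + d l = x j l"
    proof (cases "l < k")
      case True then show ?thesis using le d_def by simp
    next
      case False then show ?thesis using xiF xjF d_def unfolding FF_def by simp
    qed
  qed
  moreover have "(\<lambda>l. x i l + d l) \<in> f (Suc i)"
    using f x dF unfolding is_idealF_def by blast
  ultimately have "x j \<in> f j" using mono[of "Suc i" j] ij by auto
  then show False using x by blast
qed

definition NS :: "'a::comm_monoid_add list \<Rightarrow> ('a \<times> 'a) set \<Rightarrow> (nat \<Rightarrow> nat) set" where
  "NS gs S = {a\<in>FF (length gs). \<exists>b\<in>FF (length gs). ltk (length gs) b a \<and> (phi gs a, phi gs b) \<in> S}"

lemma NS_ideal: "congruence S \<Longrightarrow> is_idealF (length gs) (NS gs S)"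
  unfolding is_idealF_def
proof (intro conjI ballI)
  assume S: "congruence S"
  show "NS gs S \<subseteq> FF (length gs)" unfolding NS_def by blast
  fix a c assume a: "a \<in> NS gs S" and c: "c \<in> FF (length gs)"
  then obtain b where b: "a \<in> FF (length gs)" "b \<in> FF (length gs)" "ltk (length gs) b a"
    "(phi gs a, phi gs b) \<in> S" unfolding NS_def by blast
  have "(phi gs (\<lambda>i. a i + c i), phi gs (\<lambda>i. b i + c i)) \<in> S"
    using congD[OF S b(4)] by (simp add: phi_add)
  then show "(\<lambda>i. a i + c i) \<in> NS gs S" unfolding NS_def
    using FF_add[OF b(1) c] FF_add[OF b(2) c] ltk_add[OF b(3)] by blast
qed

lemma NS_mono: "S \<subseteq> S' \<Longrightarrow> NS gs S \<subseteq> NS gs S'"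
  unfolding NS_def by blast

lemma NS_eq:
  assumes G: "mon_gen G = UNIV" "set gs = G"
    and S: "congruence S" and S': "congruence S'" and sub: "S \<subseteq> S'"
    and NS: "NS gs S' \<subseteq> NS gs S"
  shows "S' \<subseteq> S"
proof
  fix z assume z: "z \<in> S'"
  obtain x y where xy: "z = (x,y)" by fastforce
  let ?k = "length gs"
  let ?r = "{(a,b). ltk ?k a b}"
  have minex: "\<exists>a0. a0 \<in> FF ?k \<and> (phi gs a0, w) \<in> S \<and> a0 \<notin> NS gs S" for w
  proof -
    obtain a where a: "a \<in> FF ?k" "phi gs a = w" using phi_surj[OF G] by blast
    let ?A = "{a\<in>FF ?k. (phi gs a, w) \<in> S}"
    have "a \<in> ?A" using a cong_refl[OF S] by simp
    then obtain a0 where a0: "a0 \<in> ?A" "\<And>b. (b, a0) \<in> ?r \<Longrightarrow> b \<notin> ?A"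
      using wfE_min[OF wf_ltk, of a ?A] by blast
    have "a0 \<notin> NS gs S"
    proof
      assume "a0 \<in> NS gs S"
      then obtain b where b: "b \<in> FF ?k" "ltk ?k b a0" "(phi gs a0, phi gs b) \<in> S"
        unfolding NS_def by blast
      have "(phi gs b, w) \<in> S" using b(3) a0(1) cong_sym[OF S] cong_trans[OF S] by blast
      then show False using a0(2)[of b] b by blast
    qed
    then show ?thesis using a0(1) by blast
  qed
  obtain a0 where a0: "a0 \<in> FF ?k" "(phi gs a0, x) \<in> S" "a0 \<notin> NS gs S'"
    using minex[of x] NS by blast
  obtain b0 where b0: "b0 \<in> FF ?k" "(phi gs b0, y) \<in> S" "b0 \<notin> NS gs S'"
    using minex[of y] NS by blast
  have "(phi gs a0, phi gs b0) \<in> S'"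
    using a0(2) b0(2) z xy sub cong_sym[OF S'] cong_trans[OF S'] by blast
  then have ab: "a0 = b0"
    using ltk_total[OF a0(1) b0(1)] a0 b0 cong_sym[OF S'] unfolding NS_def by blast
  show "z \<in> S" using a0(2) b0(2) ab xy cong_sym[OF S] cong_trans[OF S] by blast
qed

lemma wf_cong:
  fixes gs :: "'a::comm_monoid_add list"
  assumes G: "mon_gen G = UNIV" "set gs = G"
  shows "wf {(S', S::('a\<times>'a) set). congruence S \<and> congruence S' \<and> S \<subset> S'}"
proof -
  let ?rI = "{(J',J). J \<subset> J' \<and> is_idealF (length gs) J'}"
  have "wf (inv_image ?rI (NS gs))" by (rule wf_inv_image) (rule wf_ideals)
  moreover have "{(S', S::('a\<times>'a) set). congruence S \<and> congruence S' \<and> S \<subset> S'} \<subseteq> inv_image ?rI (NS gs)"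
  proof
    fix pp assume "pp \<in> {(S', S::('a\<times>'a) set). congruence S \<and> congruence S' \<and> S \<subset> S'}"
    then obtain S S' :: "('a\<times>'a) set" where pp: "pp = (S', S)" and
      S: "congruence S" "congruence S'" "S \<subseteq> S'" "S \<noteq> S'" by blast
    have "NS gs S \<subseteq> NS gs S'" using NS_mono S by blast
    moreover have "NS gs S \<noteq> NS gs S'" using NS_eq[OF G S(1,2,3)] S(3,4) by blast
    ultimately show "pp \<in> inv_image ?rI (NS gs)" using NS_ideal[OF S(2)] pp by auto
  qed
  ultimately show ?thesis by (rule wf_subset)
qed




lemma pd_exists:
  fixes R :: "('a::comm_monoid_add \<times> 'a) set"
  assumes W: "wf {(S', S::('a\<times>'a) set). congruence S \<and> congruence S' \<and> S \<subset> S'}"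
    and R: "congruence R"
  shows "\<exists>\<C>. primary_decomposition R \<C>"
  using R
proof (induct R rule: wf_induct[OF W])
  case (1 R)
  note IH = 1(1) and R = 1(2)
  show ?case
  proof (cases "primary R")
    case True
    then show ?thesis unfolding primary_decomposition_def by (intro exI[of _ "{R}"]) auto
  next
    case False
    then obtain q where q: "\<not> quot_nilpotent R q" "\<not> quot_cancellative R q"
      using R unfolding primary_def by blast
    define ann where "ann n = {(a,b). (a + nsum n q, b + nsum n q) \<in> R}" for n
    have ann_cong: "congruence (ann n)" for n
      unfolding ann_def
    proof (rule congruenceI)
      show "\<And>a. (a, a) \<in> {(a, b). (a + nsum n q, b + nsum n q) \<in> R}" using cong_refl[OF R] by simp
      show "\<And>a b. (a, b) \<in> {(a, b). (a + nsum n q, b + nsum n q) \<in> R} \<Longrightarrow>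
          (b, a) \<in> {(a, b). (a + nsum n q, b + nsum n q) \<in> R}" using cong_sym[OF R] by simp
      show "\<And>a b c. (a, b) \<in> {(a, b). (a + nsum n q, b + nsum n q) \<in> R} \<Longrightarrow>
          (b, c) \<in> {(a, b). (a + nsum n q, b + nsum n q) \<in> R} \<Longrightarrow>
          (a, c) \<in> {(a, b). (a + nsum n q, b + nsum n q) \<in> R}" using cong_trans[OF R] by simp
      show "\<And>a b c. (a, b) \<in> {(a, b). (a + nsum n q, b + nsum n q) \<in> R} \<Longrightarrow>
          (a + c, b + c) \<in> {(a, b). (a + nsum n q, b + nsum n q) \<in> R}"
      proof -
        fix a b c assume "(a, b) \<in> {(a, b). (a + nsum n q, b + nsum n q) \<in> R}"
        then have "(a + nsum n q + c, b + nsum n q + c) \<in> R" using congD[OF R] by simp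
        then show "(a + c, b + c) \<in> {(a, b). (a + nsum n q, b + nsum n q) \<in> R}" by (simp add: add_ac)
      qed
    qed
    have ann_Suc: "(a,b) \<in> ann (Suc n) \<longleftrightarrow> (a+q,b+q) \<in> ann n" for a b n
      unfolding ann_def by (simp add: nsum_Suc add.assoc)
    have ann_mono: "ann n \<subseteq> ann (Suc n)" for n
    proof
      fix z assume "z \<in> ann n"
      then obtain a b where "z = (a,b)" "(a + nsum n q, b + nsum n q) \<in> R" unfolding ann_def by blast
      then show "z \<in> ann (Suc n)" using congD[OF R, of "a + nsum n q" "b + nsum n q" q]
        unfolding ann_def by (simp add: nsum_Suc add_ac)
    qed
    obtain N where N: "ann (Suc N) = ann N"
    proof (rule ccontr)
      assume "\<not> thesis"
      then have "\<forall>N. ann (Suc N) \<noteq> ann N" using that by blast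
      then have "\<forall>i. (ann (Suc i), ann i) \<in> {(S', S). congruence S \<and> congruence S' \<and> S \<subset> S'}"
        using ann_mono ann_cong by blast
      then show False using W unfolding wf_iff_no_infinite_down_chain by blast
    qed
    have stab: "ann (m + N) = ann N" for m
    proof (induct m)
      case 0 then show ?case by simp
    next
      case (Suc m)
      show ?case
      proof (intro set_eqI)
        fix z :: "'a \<times> 'a"
        obtain a b where z: "z = (a,b)" by fastforce
        have "z \<in> ann (Suc m + N) \<longleftrightarrow> (a+q,b+q) \<in> ann (m + N)" using ann_Suc z by simp
        also have "\<dots> \<longleftrightarrow> (a+q,b+q) \<in> ann N" using Suc by simp
        also have "\<dots> \<longleftrightarrow> z \<in> ann (Suc N)" using ann_Suc z by simp
        finally show "z \<in> ann (Suc m + N) \<longleftrightarrow> z \<in> ann N" using N by simp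
      qed
    qed
    define n where "n = Suc N"
    have nn: "ann (n + n) = ann n"
      using stab[of "Suc (Suc N)"] stab[of 1] unfolding n_def by (simp add: add_ac)
    define z where "z = nsum n q"
    define R1 where "R1 = ann n"
    define I where "I = {c. \<exists>d. (c, z + d) \<in> R}"
    define R2 where "R2 = R \<union> I \<times> I"
    have R1c: "congruence R1" unfolding R1_def by (rule ann_cong)
    have RR1: "R \<subseteq> R1" unfolding R1_def ann_def using congD[OF R] by auto
    obtain a b where ab: "(q+a,q+b) \<in> R" "(a,b) \<notin> R" using q(2) unfolding quot_cancellative_def by blast
    have "(a,b) \<in> R1" unfolding R1_def ann_def n_def
      using congD[OF R ab(1), of "nsum N q"] by (simp add: nsum_Suc add_ac)
    then have RR1': "R \<noteq> R1" using ab(2) by blast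
    have Isat: "c \<in> I" if "(c, c') \<in> R" "c' \<in> I" for c c'
      using that cong_trans[OF R] unfolding I_def by blast
    have Iadd: "c + e \<in> I" if cI: "c \<in> I" for c e
    proof -
      obtain d where "(c, z + d) \<in> R" using cI unfolding I_def by blast
      then have "(c + e, z + d + e) \<in> R" using congD[OF R] by blast
      then have "(c + e, z + (d + e)) \<in> R" by (simp add: add.assoc)
      then show ?thesis unfolding I_def by blast
    qed
    have R2c: "congruence R2" unfolding R2_def
    proof (rule congruenceI)
      show "(x, x) \<in> R \<union> I \<times> I" for x using cong_refl[OF R] by blast
      show "(y, x) \<in> R \<union> I \<times> I" if "(x, y) \<in> R \<union> I \<times> I" for x y
        using that cong_sym[OF R] by blast
      show "(x, w) \<in> R \<union> I \<times> I" if "(x, y) \<in> R \<union> I \<times> I" "(y, w) \<in> R \<union> I \<times> I" for x y w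
        using that cong_trans[OF R] cong_sym[OF R] Isat by blast
      show "(x + c, y + c) \<in> R \<union> I \<times> I" if "(x, y) \<in> R \<union> I \<times> I" for x y c
        using that congD[OF R] Iadd by blast
    qed
    have RR2: "R \<subseteq> R2" unfolding R2_def by blast
    have "\<not> quot_nil R z" using q(1) unfolding quot_nilpotent_def z_def by blast
    then obtain m where m: "(m + z, z) \<notin> R" unfolding quot_nil_def by blast
    have "(z, z + 0) \<in> R" using cong_refl[OF R] by simp
    then have "z \<in> I" unfolding I_def by blast
    moreover have "(m + z, z + m) \<in> R" using cong_refl[OF R] by (simp add: add.commute)
    then have "m + z \<in> I" unfolding I_def by blast
    ultimately have RR2': "R \<noteq> R2" using m unfolding R2_def by blast
    have inter: "R1 \<inter> R2 = R"
    proof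
      show "R \<subseteq> R1 \<inter> R2" using RR1 RR2 by blast
      show "R1 \<inter> R2 \<subseteq> R"
      proof
        fix p assume p: "p \<in> R1 \<inter> R2"
        obtain x y where xy: "p = (x,y)" by fastforce
        show "p \<in> R"
        proof (cases "p \<in> R")
          case True then show ?thesis .
        next
          case False
          then have xI: "x \<in> I" and yI: "y \<in> I" using p xy unfolding R2_def by auto
          obtain d where d: "(x, z + d) \<in> R" using xI I_def by blast
          obtain e where e: "(y, z + e) \<in> R" using yI I_def by blast
          have xyz: "(x + z, y + z) \<in> R" using p xy unfolding R1_def ann_def z_def by simp
          have "(x + z, z + d + z) \<in> R" using congD[OF R d] .
          moreover have "(y + z, z + e + z) \<in> R" using congD[OF R e] .
          ultimately have "(z + d + z, z + e + z) \<in> R" using xyz cong_sym[OF R] cong_trans[OF R] by blast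
          then have "(d + nsum (n+n) q, e + nsum (n+n) q) \<in> R" unfolding z_def nsum_add
            by (simp add: add_ac)
          then have "(d, e) \<in> ann (n+n)" unfolding ann_def by simp
          then have "(d, e) \<in> ann n" using nn by simp
          then have "(z + d, z + e) \<in> R" unfolding ann_def z_def by (simp add: add.commute)
          then have "(x, y) \<in> R" using d e cong_sym[OF R] cong_trans[OF R] by blast
          then show ?thesis using xy by simp
        qed
      qed
    qed
    obtain \<C>1 where C1: "primary_decomposition R1 \<C>1" using IH R1c RR1 RR1' R by blast
    obtain \<C>2 where C2: "primary_decomposition R2 \<C>2" using IH R2c RR2 RR2' R by blast
    have "primary_decomposition R (\<C>1 \<union> \<C>2)"
      using C1 C2 inter unfolding primary_decomposition_def by auto
    then show ?thesis by blast
  qed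
qed




theorem theorem4p12:
  fixes R :: "('a::comm_monoid_add \<times> 'a) set" and P :: "'a set"
  assumes "finitely_generated TYPE('a)"
    and "congruence R"
    and "prime_ideal P"
  shows "(associated_prime R P \<longleftrightarrow>
           (\<forall>\<C>. primary_decomposition R \<C> \<longrightarrow> (\<exists>C\<in>\<C>. P_primary C P))) \<and>
         (\<not> associated_prime R P \<longrightarrow>
           (\<forall>\<C> C. primary_decomposition R \<C> \<and> C \<in> \<C> \<and> P_primary C P \<longrightarrow>
              primary_decomposition R (\<C> - {C})))"
proof -
  obtain G :: "'a set" where G: "finite G" "mon_gen G = UNIV"
    using assms(1) unfolding finitely_generated_def by blast
  obtain gs where gs: "set gs = G" using finite_list[OF G(1)] by blast
  note W = wf_cong[OF G(2) gs]
  have p2: "\<not> associated_prime R P \<longrightarrow>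
           (\<forall>\<C> C. primary_decomposition R \<C> \<and> C \<in> \<C> \<and> P_primary C P \<longrightarrow>
              primary_decomposition R (\<C> - {C}))"
    using part2[OF G(2) G(1) assms(3)] by blast
  have fwd: "associated_prime R P \<Longrightarrow>
           (\<forall>\<C>. primary_decomposition R \<C> \<longrightarrow> (\<exists>C\<in>\<C>. P_primary C P))"
    using forward[OF assms(2,3)] by blast
  have bwd: "associated_prime R P" if H: "\<forall>\<C>. primary_decomposition R \<C> \<longrightarrow> (\<exists>C\<in>\<C>. P_primary C P)"
  proof (rule ccontr)
    assume na: "\<not> associated_prime R P"
    obtain \<C> where pd: "primary_decomposition R \<C>" using pd_exists[OF W assms(2)] by blast
    let ?X = "{C\<in>\<C>. P_primary C P}"
    have finX: "finite ?X" using pd unfolding primary_decomposition_def by simp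
    have "S \<subseteq> ?X \<longrightarrow> primary_decomposition R (\<C> - S)" if "finite S" for S
      using that
    proof (induct S rule: finite_induct)
      case empty then show ?case using pd by simp
    next
      case (insert x F)
      show ?case
      proof
        assume sub: "insert x F \<subseteq> ?X"
        then have "primary_decomposition R (\<C> - F)" using insert by blast
        moreover have "x \<in> \<C> - F" "P_primary x P" using sub insert(2) by auto
        ultimately have "primary_decomposition R ((\<C> - F) - {x})" using p2 na by blast
        moreover have "(\<C> - F) - {x} = \<C> - insert x F" by blast
        ultimately show "primary_decomposition R (\<C> - insert x F)" by simp
      qed
    qed
    then have "primary_decomposition R (\<C> - ?X)" using finX by blast
    then obtain C where "C \<in> \<C> - ?X" "P_primary C P" using H by blast
    then show False by blast
  qed
  show ?thesis using fwd bwd p2 by blast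
qed



end
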